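(* Let $\mathcal A=(S,R)$ be an argumentation network with $S\neq\varnothing$, $R\subseteq S\times S$, which is finitary (every $y\in S$ has finitely many attackers). Write $\mathrm{Attack}(y)=\{z\mid zRy\}$ and regard the elements of $S$ as atoms of the logic $\mathbf{CN}$. Let $$\Delta_{\mathcal A}=\{x\mid x\in S,\ \neg\exists y\,(yRx)\}\cup\{y\leftrightarrow \textstyle\bigwedge_{z\in \mathrm{Attack}(y)}Nz\mid y\in S\}\cup\{z\to Ny\mid zRy\}\cup\{(\textstyle\bigwedge_{z\in\mathrm{Attack}(y)}\neg z)\wedge(\bigvee_{z\in\mathrm{Attack}(y)}\neg Nz)\to \neg y\wedge\neg Ny\mid y\in S\}$$ (empty conjunction is $\top$, empty disjunction is $\bot$). Then the $\mathbf{CN}$-models of $\Delta_{\mathcal A}$ correspond exactly to the complete extensions of $\mathcal A$: (i) for every $\mathbf{CN}$-model $h$ of $\Delta_{\mathcal A}$, the function $\lambda_h:S\to\{\mathrm{in},\mathrm{out},\mathrm{und}\}$ given by $\lambda_h(x)=\mathrm{in}$ if $h(x)=1$, $\lambda_h(x)=\mathrm{out}$ if $h(Nx)=1$, and $\lambda_h(x)=\mathrm{und}$ if $h(x)=h(Nx)=0$, is a well-defined legitimate Caminada labelling of $\mathcal A$; and (ii) for every legitimate Caminada labelling $\lambda$ of $\mathcal A$, the assignment $h_\lambda$ with $h_\lambda(x)=1$ iff $\lambda(x)=\mathrm{in}$ and $h_\lambda(Nx)=1$ iff $\lambda(x)=\mathrm{out}$ (for $x\in S$) is a $\mathbf{CN}$-model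 of $\Delta_{\mathcal A}$.
   Context: The logic $\mathbf{CN}$: atoms are $q$ and $Nq$ for $q$ in a set of basic atoms (here containing $S$); formulas are built with classical connectives; a $\mathbf{CN}$-model is a classical $\{0,1\}$-assignment $h$ to all atoms $q,Nq$ with $h(Nq)=1\Rightarrow h(q)=0$, with classical satisfaction; $\Delta\vdash_{\mathbf{CN}}A$ iff $\Delta\cup\{Nq\to\neg q\}\vdash A$ classically. A legitimate Caminada labelling of $(S,R)$ is a function $\lambda:S\to\{\mathrm{in},\mathrm{out},\mathrm{und}\}$ such that for all $x$: (C1) $\lambda(x)=\mathrm{in}$ iff every $y$ with $yRx$ has $\lambda(y)=\mathrm{out}$ (in particular if $x$ has no attackers); (C2) $\lambda(x)=\mathrm{out}$ iff some $y$ with $yRx$ has $\lambda(y)=\mathrm{in}$; (C3) $\lambda(x)=\mathrm{und}$ iff no attacker of $x$ is labelled in and some attacker of $x$ is labelled und. Complete extensions are the sets $\{x\mid\lambda(x)=\mathrm{in}\}$ for legitimate labellings $\lambda$, and this gives a bijection between legitimate labellings and complete extensions. *)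

theory Defs
  imports Main
begin

datatype 'a cn_atom = P 'a | N 'a

datatype 'a fm =
    Atom "'a cn_atom"
  | Top | Bot
  | Not "'a fm"
  | And "'a fm" "'a fm"
  | Or "'a fm" "'a fm"
  | Imp "'a fm" "'a fm"
  | Iff "'a fm" "'a fm"
  | BigAnd "'a fm list"
  | BigOr "'a fm list"

fun sat :: "('a cn_atom \<Rightarrow> bool) \<Rightarrow> 'a fm \<Rightarrow> bool" where
  "sat h (Atom a) = h a"
| "sat h Top = True"
| "sat h Bot = False"
| "sat h (Not A) = (\<not> sat h A)"
| "sat h (And A B) = (sat h A \<and> sat h B)"
| "sat h (Or A B) = (sat h A \<or> sat h B)"
| "sat h (Imp A B) = (sat h A \<longrightarrow> sat h B)"
| "sat h (Iff A B) = (sat h A \<longleftrightarrow> sat h B)"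
| "sat h (BigAnd As) = (\<forall>A\<in>set As. sat h A)"
| "sat h (BigOr As) = (\<exists>A\<in>set As. sat h A)"

definition cn_model :: "('a cn_atom \<Rightarrow> bool) \<Rightarrow> bool" where
  "cn_model h \<longleftrightarrow> (\<forall>q. h (N q) \<longrightarrow> \<not> h (P q))"

definition cn_model_of :: "('a cn_atom \<Rightarrow> bool) \<Rightarrow> 'a fm set \<Rightarrow> bool" where
  "cn_model_of h \<Delta> \<longleftrightarrow> cn_model h \<and> (\<forall>A\<in>\<Delta>. sat h A)"

definition Attack :: "('a \<times> 'a) set \<Rightarrow> 'a \<Rightarrow> 'a set" where
  "Attack R y = {z. (z, y) \<in> R}"

definition finitary :: "'a set \<Rightarrow> ('a \<times> 'a) set \<Rightarrow> bool" where
  "finitary S R \<longleftrightarrow> (\<forall>y\<in>S. finite (Attack R y))"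

text \<open>Some list enumerating a (finite) set; used to form finite conjunctions/disjunctions.\<close>
definition list_of :: "'b set \<Rightarrow> 'b list" where
  "list_of A = (SOME xs. set xs = A)"

definition Delta :: "'a set \<Rightarrow> ('a \<times> 'a) set \<Rightarrow> 'a fm set" where
  "Delta S R =
     {Atom (P x) | x. x \<in> S \<and> \<not> (\<exists>y. (y, x) \<in> R)}
   \<union> {Iff (Atom (P y)) (BigAnd (map (\<lambda>z. Atom (N z)) (list_of (Attack R y)))) | y. y \<in> S}
   \<union> {Imp (Atom (P z)) (Atom (N y)) | z y. (z, y) \<in> R}
   \<union> {Imp (And (BigAnd (map (\<lambda>z. Not (Atom (P z))) (list_of (Attack R y))))
               (BigOr (map (\<lambda>z. Not (Atom (N z))) (list_of (Attack R y)))))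
          (And (Not (Atom (P y))) (Not (Atom (N y)))) | y. y \<in> S}"

datatype label = In | Out | Und

definition legit_labelling :: "'a set \<Rightarrow> ('a \<times> 'a) set \<Rightarrow> ('a \<Rightarrow> label) \<Rightarrow> bool" where
  "legit_labelling S R lab \<longleftrightarrow> (\<forall>x\<in>S.
      (lab x = In \<longleftrightarrow> (\<forall>y. (y, x) \<in> R \<longrightarrow> lab y = Out)) \<and>
      (lab x = Out \<longleftrightarrow> (\<exists>y. (y, x) \<in> R \<and> lab y = In)) \<and>
      (lab x = Und \<longleftrightarrow> (\<not> (\<exists>y. (y, x) \<in> R \<and> lab y = In)) \<and> (\<exists>y. (y, x) \<in> R \<and> lab y = Und)))"

text \<open>lambda_h; for x in S with CN-model h the three cases are mutually exclusive and exhaustive.\<close>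
definition lab_of :: "('a cn_atom \<Rightarrow> bool) \<Rightarrow> 'a \<Rightarrow> label" where
  "lab_of h x = (if h (P x) then In else if h (N x) then Out else Und)"

definition assign_of :: "'a set \<Rightarrow> ('a \<Rightarrow> label) \<Rightarrow> 'a cn_atom \<Rightarrow> bool" where
  "assign_of S lab a = (case a of P x \<Rightarrow> x \<in> S \<and> lab x = In | N x \<Rightarrow> x \<in> S \<and> lab x = Out)"

end

theory Submission
  imports Defs
begin

lemma set_list_of: "finite A \<Longrightarrow> set (list_of A) = A"
  unfolding list_of_def by (metis (mono_tags) finite_list someI_ex)

lemma att_set:
  assumes "finitary S R" "y \<in> S"
  shows "set (list_of (Attack R y)) = {z. (z, y) \<in> R}"
  using assms set_list_of unfolding finitary_def Attack_def by blast

theorem theorem5: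
  fixes S :: "'a set" and R :: "('a \<times> 'a) set"
  assumes "S \<noteq> {}" and "R \<subseteq> S \<times> S" and "finitary S R"
  shows "(\<forall>h. cn_model_of h (Delta S R) \<longrightarrow>
            (\<forall>x\<in>S. \<not> (h (P x) \<and> h (N x))) \<and> legit_labelling S R (lab_of h))
       \<and> (\<forall>lab. legit_labelling S R lab \<longrightarrow> cn_model_of (assign_of S lab) (Delta S R))"
proof (intro conjI allI impI)
  fix h assume hm: "cn_model_of h (Delta S R)"
  have cn: "\<And>q. h (N q) \<Longrightarrow> \<not> h (P q)" using hm unfolding cn_model_of_def cn_model_def by blast
  have sat: "\<And>A. A \<in> Delta S R \<Longrightarrow> sat h A" using hm unfolding cn_model_of_def by blast
  have iff: "\<And>y. y \<in> S \<Longrightarrow> h (P y) = (\<forall>z. (z, y) \<in> R \<longrightarrow> h (N z))"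
  proof -
    fix y assume y: "y \<in> S"
    have "sat h (Iff (Atom (P y)) (BigAnd (map (\<lambda>z. Atom (N z)) (list_of (Attack R y)))))"
      using sat y unfolding Delta_def by blast
    thus "?thesis y" using att_set[OF assms(3) y] by auto
  qed
  have imp: "\<And>z y. (z, y) \<in> R \<Longrightarrow> h (P z) \<Longrightarrow> h (N y)"
  proof -
    fix z y assume "(z, y) \<in> R" "h (P z)"
    moreover have "sat h (Imp (Atom (P z)) (Atom (N y)))"
      using sat \<open>(z, y) \<in> R\<close> unfolding Delta_def by blast
    ultimately show "h (N y)" by simp
  qed
  have c4: "\<And>y. y \<in> S \<Longrightarrow> (\<forall>z. (z, y) \<in> R \<longrightarrow> \<not> h (P z)) \<Longrightarrow> (\<exists>z. (z, y) \<in> R \<and> \<not> h (N z))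
       \<Longrightarrow> \<not> h (P y) \<and> \<not> h (N y)"
  proof -
    fix y assume y: "y \<in> S" and a: "\<forall>z. (z, y) \<in> R \<longrightarrow> \<not> h (P z)"
      and b: "\<exists>z. (z, y) \<in> R \<and> \<not> h (N z)"
    have "sat h (Imp (And (BigAnd (map (\<lambda>z. Not (Atom (P z))) (list_of (Attack R y))))
               (BigOr (map (\<lambda>z. Not (Atom (N z))) (list_of (Attack R y)))))
          (And (Not (Atom (P y))) (Not (Atom (N y)))))"
      using sat y unfolding Delta_def by blast
    thus "\<not> h (P y) \<and> \<not> h (N y)" using att_set[OF assms(3) y] a b by auto
  qed
  show "\<forall>x\<in>S. \<not> (h (P x) \<and> h (N x))" using cn by blast
  have outiff: "\<And>x. x \<in> S \<Longrightarrow> h (N x) = (\<exists>y. (y, x) \<in> R \<and> h (P y))"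
  proof -
    fix x assume x: "x \<in> S"
    show "?thesis x"
    proof
      assume nx: "h (N x)"
      show "\<exists>y. (y, x) \<in> R \<and> h (P y)"
      proof (rule ccontr)
        assume na: "\<not> (\<exists>y. (y, x) \<in> R \<and> h (P y))"
        show False
        proof (cases "\<exists>z. (z, x) \<in> R \<and> \<not> h (N z)")
          case True then show False using c4[OF x] na nx by blast
        next
          case False then have "h (P x)" using iff[OF x] by blast
          then show False using cn nx by blast
        qed
      qed
    qed (use imp in blast)
  qed
  show "legit_labelling S R (lab_of h)"
    unfolding legit_labelling_def
  proof
    fix x assume x: "x \<in> S"
    have rS: "\<And>y. (y, x) \<in> R \<Longrightarrow> y \<in> S" using assms(2) by blast
    have lIn: "\<And>y. (lab_of h y = In) = h (P y)" by (simp add: lab_of_def)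
    have lOut: "\<And>y. (lab_of h y = Out) = h (N y)" using cn by (auto simp: lab_of_def)
    have lUnd: "\<And>y. (lab_of h y = Und) = (\<not> h (P y) \<and> \<not> h (N y))" by (auto simp: lab_of_def)
    show "(lab_of h x = In \<longleftrightarrow> (\<forall>y. (y, x) \<in> R \<longrightarrow> lab_of h y = Out)) \<and>
      (lab_of h x = Out \<longleftrightarrow> (\<exists>y. (y, x) \<in> R \<and> lab_of h y = In)) \<and>
      (lab_of h x = Und \<longleftrightarrow> (\<not> (\<exists>y. (y, x) \<in> R \<and> lab_of h y = In)) \<and> (\<exists>y. (y, x) \<in> R \<and> lab_of h y = Und))"
      unfolding lIn lOut lUnd
      using iff[OF x] outiff[OF x] cn by blast
  qed
next
  fix lab assume L: "legit_labelling S R lab"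
  have rS: "\<And>y x. (y, x) \<in> R \<Longrightarrow> y \<in> S \<and> x \<in> S" using assms(2) by blast
  have Lx: "\<And>x. x \<in> S \<Longrightarrow> (lab x = In \<longleftrightarrow> (\<forall>y. (y, x) \<in> R \<longrightarrow> lab y = Out)) \<and>
      (lab x = Out \<longleftrightarrow> (\<exists>y. (y, x) \<in> R \<and> lab y = In))"
    using L unfolding legit_labelling_def by blast
  show "cn_model_of (assign_of S lab) (Delta S R)"
    unfolding cn_model_of_def cn_model_def
  proof (intro conjI allI impI ballI)
    fix q show "assign_of S lab (N q) \<Longrightarrow> \<not> assign_of S lab (P q)"
      by (simp add: assign_of_def)
  next
    fix A assume "A \<in> Delta S R"
    then consider (a) x where "A = Atom (P x)" "x \<in> S" "\<not> (\<exists>y. (y, x) \<in> R)"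
      | (b) y where "A = Iff (Atom (P y)) (BigAnd (map (\<lambda>z. Atom (N z)) (list_of (Attack R y))))" "y \<in> S"
      | (c) z y where "A = Imp (Atom (P z)) (Atom (N y))" "(z, y) \<in> R"
      | (d) y where "A = Imp (And (BigAnd (map (\<lambda>z. Not (Atom (P z))) (list_of (Attack R y))))
               (BigOr (map (\<lambda>z. Not (Atom (N z))) (list_of (Attack R y)))))
          (And (Not (Atom (P y))) (Not (Atom (N y))))" "y \<in> S"
      unfolding Delta_def by blast
    then show "sat (assign_of S lab) A"
    proof cases
      case a then show ?thesis using Lx[OF a(2)] by (simp add: assign_of_def)
    next
      case b then show ?thesis using Lx[OF b(2)] rS att_set[OF assms(3) b(2)]
        by (auto simp: assign_of_def)
    next
      case c then show ?thesis using Lx rS by (auto simp: assign_of_def)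
    next
      case d then show ?thesis using Lx[OF d(2)] rS att_set[OF assms(3) d(2)]
        by (auto simp: assign_of_def)
    qed
  qed
qed

end
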